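(* Let $M$ be a smooth compact manifold with the distance $d$ induced by a Riemannian metric, and let $\omega:\Lambda\times M\to M$ be an IFS (with $\Lambda$ a compact metric space) that is topologically stable. Then $\omega$ has the concordant shadowing property.
   Context: An IFS with phase space $M$ is given by a compact metric space $\Lambda$ and a continuous map $\omega:\Lambda\times M\to M$; write $\omega_\lambda=\omega(\lambda,\cdot)$. $C^0(M)$ denotes the continuous self-maps of $M$ with $d_{C^0}(f,g)=\max_{x}d(f(x),g(x))$. For two IFS $\omega$ (parameter space $\Lambda$) and $\tilde\omega$ (parameter space $\tilde\Lambda$) on $M$, $d_H(\omega,\tilde\omega)$ denotes the Hausdorff distance in $(C^0(M),d_{C^0})$ between the sets $\{\omega_\lambda:\lambda\in\Lambda\}$ and $\{\tilde\omega_\lambda:\lambda\in\tilde\Lambda\}$. For $\sigma=(\lambda_1,\lambda_2,\dots)\in\Lambda^{\mathbb N}$, set $\omega_{\sigma_0}=\mathrm{id}$ and $\omega_{\sigma_k}=\omega_{\lambda_k}\circ\cdots\circ\omega_{\lambda_1}$. A sequence $\{x_k\}_{k\ge0}$ is a $\delta$-chain with sequence of parameters $\sigma=(\lambda_1,\lambda_2,\dots)$ if $d(x_k,\omega_{\lambda_k}(x_{k-1}))\le\delta$ for all $k\ge1$. The IFS has the concordant shadowing property if for every $\varepsilon>0$ there is $\delta>0$ such that for every $\delta$-chain $\{x_k\}$ with sequence of parameters $\sigma$ there is $y\in M$ with $d(x_k,\omega_{\sigma_k}(y))<\varepsilon$ for all $k\ge0$. Given IFS $\omega,\tilde\omega$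 and sequences $\sigma=(\lambda_k)$ in $\Lambda$, $\tilde\sigma=(\tilde\lambda_k)$ in $\tilde\Lambda$ of the same length, the pair $(\sigma,\tilde\sigma)$ is $\delta$-compatible if $d_{C^0}(\omega_{\lambda_k},\tilde\omega_{\tilde\lambda_k})<\delta$ for all $k$. The IFS $\omega$ is topologically stable if for every $\varepsilon>0$ there is $\delta>0$ such that whenever $\tilde\omega$ is an IFS on $M$ (with any compact metric parameter space $\tilde\Lambda$) with $d_H(\omega,\tilde\omega)\le\delta$, then for every $\delta$-compatible pair $(\sigma,\tilde\sigma)\in\Lambda^{\mathbb N}\times\tilde\Lambda^{\mathbb N}$ there is a continuous $h:M\to M$ with $d_{C^0}(\omega_{\sigma_k}\circ h,\tilde\omega_{\tilde\sigma_k})<\varepsilon$ for all $k\in\mathbb N$ and $d_{C^0}(h,\mathrm{id})<\varepsilon$. *)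

theory Defs
  imports "HOL-Analysis.Analysis"
begin

fun iter_pderiv :: "'a::euclidean_space list \<Rightarrow> ('a \<Rightarrow> 'b::euclidean_space) \<Rightarrow> 'a \<Rightarrow> 'b" where
  "iter_pderiv [] f = f"
| "iter_pderiv (v # vs) f = (\<lambda>x. vector_derivative (\<lambda>t. iter_pderiv vs f (x + t *\<^sub>R v)) (at 0))"

definition smooth_on :: "'a::euclidean_space set \<Rightarrow> ('a \<Rightarrow> 'b::euclidean_space) \<Rightarrow> bool" where
  "smooth_on U f \<longleftrightarrow>
     (\<forall>vs. set vs \<subseteq> Basis \<longrightarrow>
        continuous_on U (iter_pderiv vs f) \<and>
        (\<forall>v\<in>Basis. \<forall>x\<in>U.
           ((\<lambda>t. iter_pderiv vs f (x + t *\<^sub>R v)) has_vector_derivative iter_pderiv (v # vs) f x) (at 0)))"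

definition smooth_submanifold :: "nat \<Rightarrow> 'a::euclidean_space set \<Rightarrow> bool" where
  "smooth_submanifold m M \<longleftrightarrow>
     (\<forall>p\<in>M. \<exists>U V (\<phi>::'a \<Rightarrow> 'a) \<psi> S.
        open U \<and> p \<in> U \<and> open V \<and> homeomorphism U V \<phi> \<psi> \<and>
        smooth_on U \<phi> \<and> smooth_on V \<psi> \<and>
        subspace S \<and> dim S = m \<and> \<phi> ` (U \<inter> M) = V \<inter> S)"

definition smooth_compact_manifold :: "'a::euclidean_space set \<Rightarrow> bool" where
  "smooth_compact_manifold M \<longleftrightarrow> M \<noteq> {} \<and> compact M \<and> (\<exists>m. smooth_submanifold m M)"

definition IFS :: "'l::metric_space set \<Rightarrow> 'a::metric_space set \<Rightarrow> ('l \<Rightarrow> 'a \<Rightarrow> 'a) \<Rightarrow> bool" where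
  "IFS L M \<omega> \<longleftrightarrow> compact L \<and> L \<noteq> {} \<and>
     continuous_on (L \<times> M) (\<lambda>(l, x). \<omega> l x) \<and> (\<forall>l\<in>L. \<forall>x\<in>M. \<omega> l x \<in> M)"

definition dC0 :: "'a::metric_space set \<Rightarrow> ('a \<Rightarrow> 'a) \<Rightarrow> ('a \<Rightarrow> 'a) \<Rightarrow> real" where
  "dC0 M f g = (SUP x\<in>M. dist (f x) (g x))"

definition dH_IFS :: "'a::metric_space set \<Rightarrow> 'l set \<Rightarrow> ('l \<Rightarrow> 'a \<Rightarrow> 'a) \<Rightarrow> 'm set \<Rightarrow> ('m \<Rightarrow> 'a \<Rightarrow> 'a) \<Rightarrow> real" where
  "dH_IFS M L \<omega> L' \<omega>' =
     max (SUP l\<in>L. INF l'\<in>L'. dC0 M (\<omega> l) (\<omega>' l'))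
         (SUP l'\<in>L'. INF l\<in>L. dC0 M (\<omega> l) (\<omega>' l'))"

text \<open>\<open>comp_seq \<omega> \<sigma> k\<close> = \<omega>_{\<sigma>_k}; the sequence \<open>\<sigma>\<close> is 0-indexed: \<open>\<sigma> 0 = \<lambda>_1\<close>.\<close>
fun comp_seq :: "('l \<Rightarrow> 'a \<Rightarrow> 'a) \<Rightarrow> (nat \<Rightarrow> 'l) \<Rightarrow> nat \<Rightarrow> 'a \<Rightarrow> 'a" where
  "comp_seq \<omega> \<sigma> 0 = id"
| "comp_seq \<omega> \<sigma> (Suc k) = \<omega> (\<sigma> k) \<circ> comp_seq \<omega> \<sigma> k"

definition delta_chain :: "'a::metric_space set \<Rightarrow> ('l \<Rightarrow> 'a \<Rightarrow> 'a) \<Rightarrow> real \<Rightarrow> (nat \<Rightarrow> 'a) \<Rightarrow> (nat \<Rightarrow> 'l) \<Rightarrow> bool" where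
  "delta_chain M \<omega> \<delta> xs \<sigma> \<longleftrightarrow>
     (\<forall>k. xs k \<in> M) \<and> (\<forall>k. dist (xs (Suc k)) (\<omega> (\<sigma> k) (xs k)) \<le> \<delta>)"

definition concordant_shadowing :: "'l::metric_space set \<Rightarrow> 'a::metric_space set \<Rightarrow> ('l \<Rightarrow> 'a \<Rightarrow> 'a) \<Rightarrow> bool" where
  "concordant_shadowing L M \<omega> \<longleftrightarrow>
     (\<forall>\<epsilon>>0. \<exists>\<delta>>0. \<forall>\<sigma> xs. (\<forall>k. \<sigma> k \<in> L) \<and> delta_chain M \<omega> \<delta> xs \<sigma> \<longrightarrow>
        (\<exists>y\<in>M. \<forall>k. dist (xs k) (comp_seq \<omega> \<sigma> k y) < \<epsilon>))"

text \<open>The perturbed IFS has a compact parameter space \<open>L'\<close> which is taken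
  inside the Hilbert-cube-like metric space \<open>nat \<Rightarrow> real\<close> (product metric); every compact metric
  space embeds homeomorphically there, so this ranges over all compact metric parameter spaces
  up to homeomorphism (only the continuity of the IFS map matters).\<close>
definition topologically_stable :: "'l::metric_space set \<Rightarrow> 'a::metric_space set \<Rightarrow> ('l \<Rightarrow> 'a \<Rightarrow> 'a) \<Rightarrow> bool" where
  "topologically_stable L M \<omega> \<longleftrightarrow>
     (\<forall>\<epsilon>>0. \<exists>\<delta>>0. \<forall>(L' :: (nat \<Rightarrow> real) set) \<omega>'.
        IFS L' M \<omega>' \<and> dH_IFS M L \<omega> L' \<omega>' \<le> \<delta> \<longrightarrow>
        (\<forall>\<sigma> \<sigma>'. (\<forall>k. \<sigma> k \<in> L) \<and> (\<forall>k. \<sigma>' k \<in> L') \<and>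
                 (\<forall>k. dC0 M (\<omega> (\<sigma> k)) (\<omega>' (\<sigma>' k)) < \<delta>) \<longrightarrow>
           (\<exists>h. continuous_on M h \<and> h ` M \<subseteq> M \<and>
                (\<forall>k. dC0 M (comp_seq \<omega> \<sigma> k \<circ> h) (comp_seq \<omega>' \<sigma>' k) < \<epsilon>) \<and>
                dC0 M h id < \<epsilon>)))"

end

theory Submission
  imports Defs
begin

lemma dC0_le:
  assumes "M \<noteq> {}" "\<And>x. x \<in> M \<Longrightarrow> dist (f x) (g x) \<le> c"
  shows "dC0 M f g \<le> c"
  unfolding dC0_def using assms by (intro cSUP_least) auto

lemma dC0_ge:
  assumes "bounded M" "f ` M \<subseteq> M" "g ` M \<subseteq> M" "x \<in> M"
  shows "dist (f x) (g x) \<le> dC0 M f g"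
  unfolding dC0_def
proof (rule cSUP_upper)
  show "bdd_above ((\<lambda>x. dist (f x) (g x)) ` M)"
    using assms by (intro bdd_aboveI[where M="diameter M"]) (auto intro!: diameter_bounded_bound)
qed (use assms in auto)

lemma dC0_nonneg:
  assumes "bounded M" "f ` M \<subseteq> M" "g ` M \<subseteq> M" "M \<noteq> {}"
  shows "0 \<le> dC0 M f g"
proof -
  obtain x where x: "x \<in> M" using assms(4) by blast
  show ?thesis using dC0_ge[OF assms(1-3) x] zero_le_dist[of "f x" "g x"] by linarith
qed

lemma local_ENR:
  fixes M :: "'a::euclidean_space set"
  assumes "smooth_submanifold m M" "p \<in> M"
  shows "\<exists>U. open U \<and> p \<in> U \<and> ENR (U \<inter> M)"
proof -
  obtain U V and \<phi> :: "'a \<Rightarrow> 'a" and \<psi> S where UV: "open U" "p \<in> U" "open V" "homeomorphism U V \<phi> \<psi>"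
    "subspace S" "\<phi> ` (U \<inter> M) = V \<inter> S"
    using assms unfolding smooth_submanifold_def by meson
  have h: "homeomorphism (U \<inter> M) (V \<inter> S) \<phi> \<psi>"
    by (rule homeomorphism_of_subsets[OF UV(4) _ _ UV(6)]) auto
  have "ENR S" using UV(5) by (simp add: ENR_convex_closed closed_subspace subspace_imp_convex)
  moreover have "openin (top_of_set S) (V \<inter> S)" using openin_open_Int[OF UV(3), of S] by (simp add: Int_commute)
  ultimately have "ENR (V \<inter> S)" by (rule ENR_openin)
  then have "ENR (U \<inter> M)" using h ENR_homeomorphic_ENR homeomorphic_def by blast
  then show ?thesis using UV by blast
qed

lemma local_move:
  fixes M :: "'a::euclidean_space set"
  assumes "closed M" "open U" "p0 \<in> U" "p0 \<in> M" "ENR (U \<inter> M)"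
  shows "\<exists>A>0. \<forall>e>0. \<exists>b>0. \<forall>p\<in>M \<inter> ball p0 A. \<forall>q\<in>M. dist p q < b \<longrightarrow>
           (\<exists>g. continuous_on M g \<and> g ` M \<subseteq> M \<and> g p = q \<and> (\<forall>x\<in>M. dist (g x) x < e))"
proof -
  obtain W where W: "open W" "(U \<inter> M) retract_of W" using assms(5) unfolding ENR_def by blast
  then obtain r where r: "U \<inter> M \<subseteq> W" "continuous_on W r" "r ` W \<subseteq> U \<inter> M" "\<And>x. x \<in> U \<inter> M \<Longrightarrow> r x = x"
    unfolding retract_of_def retraction_def by blast
  have "open (W \<inter> U)" using W assms by auto
  moreover have "p0 \<in> W \<inter> U" using r assms by auto
  ultimately obtain R where R: "R > 0" "cball p0 R \<subseteq> W \<inter> U" using open_contains_cball by blast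
  define A where "A = R / 4"
  have A: "A > 0" using R by (simp add: A_def)
  have rc: "continuous_on (cball p0 R) r" using r(2) R(2) continuous_on_subset by blast
  have ru: "uniformly_continuous_on (cball p0 R) r"
    by (rule compact_uniformly_continuous[OF rc compact_cball])
  show ?thesis
  proof (rule exI[of _ A], intro conjI allI impI ballI A)
    fix e :: real assume e: "e > 0"
    obtain d where d: "d > 0" "\<And>x x'. x \<in> cball p0 R \<Longrightarrow> x' \<in> cball p0 R \<Longrightarrow> dist x' x < d \<Longrightarrow> dist (r x') (r x) < e"
      using ru e unfolding uniformly_continuous_on_def by metis
    show "\<exists>b>0. \<forall>p\<in>M \<inter> ball p0 A. \<forall>q\<in>M. dist p q < b \<longrightarrow>
           (\<exists>g. continuous_on M g \<and> g ` M \<subseteq> M \<and> g p = q \<and> (\<forall>x\<in>M. dist (g x) x < e))"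
    proof (rule exI[of _ "min d A"], intro conjI allI impI ballI)
      show "min d A > 0" using d A by simp
      fix p q assume p: "p \<in> M \<inter> ball p0 A" and q: "q \<in> M" and pq: "dist p q < min d A"
      define c where "c = q - p"
      have nc: "norm c < min d A" using pq by (simp add: c_def dist_norm norm_minus_commute)
      define \<beta> where "\<beta> x = 1 - dist x p / A" for x
      define g where "g x = (if dist x p \<le> A then r (x + \<beta> x *\<^sub>R c) else x)" for x
      have dp0p: "dist p0 p < A" using p by simp
      have inR: "x + \<beta> x *\<^sub>R c \<in> cball p0 R" if "dist x p \<le> A" for x
      proof -
        have b0: "0 \<le> \<beta> x" "\<beta> x \<le> 1" using that A by (auto simp: \<beta>_def field_simps)
        have "norm (\<beta> x *\<^sub>R c) \<le> norm c" using b0 by (simp add: mult_left_le_one_le)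
        then have "dist (x + \<beta> x *\<^sub>R c) x < A" using nc by (simp add: dist_norm)
        moreover have "dist p0 x \<le> dist p0 p + dist p x" by (rule dist_triangle)
        ultimately have "dist p0 (x + \<beta> x *\<^sub>R c) < 3 * A"
          using dp0p that dist_triangle[of p0 "x + \<beta> x *\<^sub>R c" x] by (simp add: dist_commute)
        then show ?thesis using R by (simp add: A_def)
      qed
      have xR: "x \<in> cball p0 R" if "dist x p \<le> A" for x
        using dp0p that dist_triangle[of p0 x p] R by (simp add: A_def dist_commute)
      have gcont: "continuous_on M g"
      proof -
        have "continuous_on ((M \<inter> cball p A) \<union> (M \<inter> - ball p A)) g"
          unfolding g_def
        proof (rule continuous_on_cases)
          show "closed (M \<inter> cball p A)" "closed (M \<inter> - ball p A)" using assms(1) by auto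
          show "continuous_on (M \<inter> cball p A) (\<lambda>x. r (x + \<beta> x *\<^sub>R c))"
          proof (rule continuous_on_compose2[OF rc])
            show "continuous_on (M \<inter> cball p A) (\<lambda>x. x + \<beta> x *\<^sub>R c)"
              unfolding \<beta>_def by (intro continuous_intros) (use A in auto)
            show "(\<lambda>x. x + \<beta> x *\<^sub>R c) ` (M \<inter> cball p A) \<subseteq> cball p0 R"
              using inR by (auto simp: dist_commute)
          qed
          show "continuous_on (M \<inter> - ball p A) (\<lambda>x. x)" by (rule continuous_on_id)
          show "\<forall>x. (x \<in> M \<inter> cball p A \<and> \<not> dist x p \<le> A) \<or> (x \<in> M \<inter> - ball p A \<and> dist x p \<le> A) \<longrightarrow>
                r (x + \<beta> x *\<^sub>R c) = x"
          proof (intro allI impI)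
            fix x assume "(x \<in> M \<inter> cball p A \<and> \<not> dist x p \<le> A) \<or> (x \<in> M \<inter> - ball p A \<and> dist x p \<le> A)"
            then have x: "x \<in> M" "dist x p = A" by (auto simp: dist_commute)
            then have "\<beta> x = 0" using A by (simp add: \<beta>_def)
            moreover have "x \<in> U \<inter> M" using xR[of x] x R by auto
            ultimately show "r (x + \<beta> x *\<^sub>R c) = x" using r(4) by simp
          qed
        qed
        moreover have "(M \<inter> cball p A) \<union> (M \<inter> - ball p A) = M" by auto
        ultimately show ?thesis by simp
      qed
      have gM: "g ` M \<subseteq> M"
      proof
        fix y assume "y \<in> g ` M"
        then obtain x where x: "x \<in> M" "y = g x" by auto
        show "y \<in> M"
        proof (cases "dist x p \<le> A")
          case True
          then have "x + \<beta> x *\<^sub>R c \<in> W" using inR R by auto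
          then show ?thesis using r(3) x True by (auto simp: g_def)
        qed (use x in \<open>auto simp: g_def\<close>)
      qed
      have gp: "g p = q"
      proof -
        have "\<beta> p = 1" by (simp add: \<beta>_def)
        then have "g p = r q" using A by (simp add: g_def c_def)
        moreover have "q \<in> U \<inter> M"
        proof -
          have "dist q p \<le> A" using pq by (simp add: dist_commute)
          then show ?thesis using xR[of q] R q by auto
        qed
        ultimately show ?thesis using r(4) by simp
      qed
      have gclose: "dist (g x) x < e" if x: "x \<in> M" for x
      proof (cases "dist x p \<le> A")
        case True
        have b0: "0 \<le> \<beta> x" "\<beta> x \<le> 1" using True A by (auto simp: \<beta>_def field_simps)
        have "norm (\<beta> x *\<^sub>R c) \<le> norm c" using b0 by (simp add: mult_left_le_one_le)
        then have "dist (x + \<beta> x *\<^sub>R c) x < d" using nc by (simp add: dist_norm)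
        then have "dist (r (x + \<beta> x *\<^sub>R c)) (r x) < e" using d(2)[OF xR[OF True] inR[OF True]] by simp
        moreover have "r x = x" using xR[OF True] R x r(4) by auto
        ultimately show ?thesis using True by (simp add: g_def)
      qed (use e in \<open>simp add: g_def\<close>)
      show "\<exists>g. continuous_on M g \<and> g ` M \<subseteq> M \<and> g p = q \<and> (\<forall>x\<in>M. dist (g x) x < e)"
        using gcont gM gp gclose by blast
    qed
  qed
qed


lemma move:
  fixes M :: "'a::euclidean_space set"
  assumes "smooth_compact_manifold M" "e > 0"
  shows "\<exists>b>0. \<forall>p\<in>M. \<forall>q\<in>M. dist p q < b \<longrightarrow>
           (\<exists>g. continuous_on M g \<and> g ` M \<subseteq> M \<and> g p = q \<and> (\<forall>x\<in>M. dist (g x) x < e))"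
proof -
  obtain m where sm: "smooth_submanifold m M" and cM: "compact M" and ne: "M \<noteq> {}"
    using assms(1) unfolding smooth_compact_manifold_def by blast
  have clM: "closed M" using cM compact_imp_closed by blast
  have Aex: "\<forall>p0\<in>M. \<exists>A>0. \<forall>e>0. \<exists>b>0. \<forall>p\<in>M \<inter> ball p0 A. \<forall>q\<in>M. dist p q < b \<longrightarrow>
           (\<exists>g. continuous_on M g \<and> g ` M \<subseteq> M \<and> g p = q \<and> (\<forall>x\<in>M. dist (g x) x < e))"
  proof
    fix p0 assume p0: "p0 \<in> M"
    obtain U where "open U" "p0 \<in> U" "ENR (U \<inter> M)" using local_ENR[OF sm p0] by blast
    then show "\<exists>A>0. \<forall>e>0. \<exists>b>0. \<forall>p\<in>M \<inter> ball p0 A. \<forall>q\<in>M. dist p q < b \<longrightarrow>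
           (\<exists>g. continuous_on M g \<and> g ` M \<subseteq> M \<and> g p = q \<and> (\<forall>x\<in>M. dist (g x) x < e))"
      using local_move[OF clM _ _ p0] by blast
  qed
  obtain A where A: "\<forall>p0\<in>M. A p0 > 0 \<and> (\<forall>e>0. \<exists>b>0. \<forall>p\<in>M \<inter> ball p0 (A p0). \<forall>q\<in>M. dist p q < b \<longrightarrow>
           (\<exists>g. continuous_on M g \<and> g ` M \<subseteq> M \<and> g p = q \<and> (\<forall>x\<in>M. dist (g x) x < e)))"
    using bchoice[OF Aex] by blast
  have "M \<subseteq> (\<Union>p0\<in>M. ball p0 (A p0))" using A by force
  then obtain C where C: "C \<subseteq> M" "finite C" "M \<subseteq> (\<Union>p0\<in>C. ball p0 (A p0))"
    using compactE_image[OF cM, of M "\<lambda>p0. ball p0 (A p0)"] by blast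
  have "C \<noteq> {}" using C ne by auto
  have Bex: "\<forall>p0\<in>C. \<exists>b>0. \<forall>p\<in>M \<inter> ball p0 (A p0). \<forall>q\<in>M. dist p q < b \<longrightarrow>
           (\<exists>g. continuous_on M g \<and> g ` M \<subseteq> M \<and> g p = q \<and> (\<forall>x\<in>M. dist (g x) x < e))"
  proof
    fix p0 assume "p0 \<in> C"
    then have "p0 \<in> M" using C(1) by blast
    then show "\<exists>b>0. \<forall>p\<in>M \<inter> ball p0 (A p0). \<forall>q\<in>M. dist p q < b \<longrightarrow>
           (\<exists>g. continuous_on M g \<and> g ` M \<subseteq> M \<and> g p = q \<and> (\<forall>x\<in>M. dist (g x) x < e))"
      using A assms(2) by blast
  qed
  obtain B where B0: "\<forall>p0\<in>C. B p0 > 0 \<and> (\<forall>p\<in>M \<inter> ball p0 (A p0). \<forall>q\<in>M. dist p q < B p0 \<longrightarrow>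
           (\<exists>g. continuous_on M g \<and> g ` M \<subseteq> M \<and> g p = q \<and> (\<forall>x\<in>M. dist (g x) x < e)))"
    using bchoice[OF Bex] by blast
  then have B: "\<And>p0. p0 \<in> C \<Longrightarrow> B p0 > 0" "\<And>p0. p0 \<in> C \<Longrightarrow> \<forall>p\<in>M \<inter> ball p0 (A p0). \<forall>q\<in>M. dist p q < B p0 \<longrightarrow>
           (\<exists>g. continuous_on M g \<and> g ` M \<subseteq> M \<and> g p = q \<and> (\<forall>x\<in>M. dist (g x) x < e))"
    by auto
  define b where "b = Min (B ` C)"
  have b0: "b > 0" unfolding b_def using B(1) C(2) \<open>C \<noteq> {}\<close> by auto
  show ?thesis
  proof (rule exI[of _ b], intro conjI ballI impI b0)
    fix p q assume p: "p \<in> M" and q: "q \<in> M" and pq: "dist p q < b"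
    obtain p0 where p0: "p0 \<in> C" "p \<in> ball p0 (A p0)" using C(3) p by blast
    have "b \<le> B p0" unfolding b_def using C(2) p0(1) by simp
    then have "dist p q < B p0" using pq by linarith
    moreover have "p \<in> M \<inter> ball p0 (A p0)" using p p0(2) by blast
    ultimately show "\<exists>g. continuous_on M g \<and> g ` M \<subseteq> M \<and> g p = q \<and> (\<forall>x\<in>M. dist (g x) x < e)"
      using B(2)[OF p0(1)] q by blast
  qed
qed

lemma comp_seq_in:
  assumes "\<And>k x. x \<in> M \<Longrightarrow> f (s k) x \<in> M" "x \<in> M"
  shows "comp_seq f s k x \<in> M"
  using assms by (induction k) auto

lemma comp_seq_cont:
  assumes "\<And>k x. x \<in> M \<Longrightarrow> f (s k) x \<in> M" "\<And>k. continuous_on M (f (s k))"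
  shows "continuous_on M (comp_seq f s k)"
proof (induction k)
  case 0 then show ?case by (simp add: continuous_on_id')
next
  case (Suc k)
  have "comp_seq f s k ` M \<subseteq> M" using comp_seq_in[of M f s] assms(1) by blast
  then have c: "continuous_on (comp_seq f s k ` M) (f (s k))" using continuous_on_subset assms(2) by blast
  show ?case using continuous_on_compose[OF Suc.IH c] by simp
qed


theorem theorem2:
  fixes M :: "'a::euclidean_space set"
    and L :: "'l::metric_space set"
    and \<omega> :: "'l \<Rightarrow> 'a \<Rightarrow> 'a"
  assumes "smooth_compact_manifold M"
    and "IFS L M \<omega>"
    and "topologically_stable L M \<omega>"
  shows "concordant_shadowing L M \<omega>"
proof -
  have cL: "compact L" and Lne: "L \<noteq> {}" and cont: "continuous_on (L \<times> M) (\<lambda>(l, x). \<omega> l x)"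
    and into: "\<And>l x. l \<in> L \<Longrightarrow> x \<in> M \<Longrightarrow> \<omega> l x \<in> M"
    using assms(2) unfolding IFS_def by auto
  have cM: "compact M" and Mne: "M \<noteq> {}" using assms(1) unfolding smooth_compact_manifold_def by auto
  have bM: "bounded M" using cM compact_imp_bounded by blast
  have \<omega>cont: "continuous_on M (\<omega> l)" if "l \<in> L" for l
  proof -
    have "continuous_on M (\<lambda>x. (\<lambda>(l, x). \<omega> l x) (l, x))"
      by (rule continuous_on_compose2[OF cont]) (use that in \<open>auto intro!: continuous_intros\<close>)
    then show ?thesis by simp
  qed
  have \<omega>M: "\<omega> l ` M \<subseteq> M" if "l \<in> L" for l using into that by auto
  show ?thesis unfolding concordant_shadowing_def
  proof (intro allI impI)
    fix \<epsilon> :: real assume \<epsilon>: "\<epsilon> > 0"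
    obtain \<delta>0 where \<delta>0: "\<delta>0 > 0" and TS: "\<And>(L' :: (nat \<Rightarrow> real) set) \<omega>'.
        IFS L' M \<omega>' \<Longrightarrow> dH_IFS M L \<omega> L' \<omega>' \<le> \<delta>0 \<Longrightarrow>
        (\<forall>\<sigma> \<sigma>'. (\<forall>k. \<sigma> k \<in> L) \<and> (\<forall>k. \<sigma>' k \<in> L') \<and>
                 (\<forall>k. dC0 M (\<omega> (\<sigma> k)) (\<omega>' (\<sigma>' k)) < \<delta>0) \<longrightarrow>
           (\<exists>h. continuous_on M h \<and> h ` M \<subseteq> M \<and>
                (\<forall>k. dC0 M (comp_seq \<omega> \<sigma> k \<circ> h) (comp_seq \<omega>' \<sigma>' k) < \<epsilon>/2) \<and>
                dC0 M h id < \<epsilon>/2))"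
      using assms(3) \<epsilon> unfolding topologically_stable_def
      by (metis half_gt_zero)
    have uc: "uniformly_continuous_on (L \<times> M) (\<lambda>(l, x). \<omega> l x)"
      by (rule compact_uniformly_continuous[OF cont compact_Times[OF cL cM]])
    obtain \<rho> where \<rho>: "\<rho> > 0" "\<And>z z'. z \<in> L \<times> M \<Longrightarrow> z' \<in> L \<times> M \<Longrightarrow> dist z' z < \<rho> \<Longrightarrow>
        dist ((\<lambda>(l, x). \<omega> l x) z') ((\<lambda>(l, x). \<omega> l x) z) < \<delta>0/4"
      using uc \<delta>0 unfolding uniformly_continuous_on_def by (metis zero_less_divide_iff zero_less_numeral)
    have close: "dist (\<omega> l x) (\<omega> l' x) < \<delta>0/4" if "l \<in> L" "l' \<in> L" "x \<in> M" "dist l l' < \<rho>" for l l' x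
    proof -
      have "dist (l, x) (l', x) < \<rho>" using that by (simp add: dist_Pair_Pair)
      then show ?thesis using \<rho>(2)[of "(l', x)" "(l, x)"] that by auto
    qed
    have "L \<subseteq> (\<Union>l\<in>L. ball l \<rho>)" using \<rho>(1) by force
    then obtain T where T: "T \<subseteq> L" "finite T" "L \<subseteq> (\<Union>l\<in>T. ball l \<rho>)"
      using compactE_image[OF cL, of L "\<lambda>l. ball l \<rho>"] by blast
    obtain m :: nat and net where net: "T = net ` {i. i < m}"
      using finite_imp_nat_seg_image_inj_on[OF T(2)] by blast
    have netL: "net j \<in> L" if "j < m" for j using net T(1) that by auto
    have netc: "\<exists>j<m. dist (net j) l < \<rho>" if "l \<in> L" for l
      using T(3) that net by (auto simp: subset_eq)
    define idx where "idx l = (SOME j. j < m \<and> dist (net j) l < \<rho>)" for l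
    have idx: "idx l < m" "dist (net (idx l)) l < \<rho>" if "l \<in> L" for l
      using someI_ex[OF netc[OF that]] unfolding idx_def by auto
    have m0: "m > 0" using idx Lne by fastforce
    obtain b where b: "b > 0" and mv: "\<And>p q. p \<in> M \<Longrightarrow> q \<in> M \<Longrightarrow> dist p q < b \<Longrightarrow>
        (\<exists>g. continuous_on M g \<and> g ` M \<subseteq> M \<and> g p = q \<and> (\<forall>x\<in>M. dist (g x) x < \<delta>0/4))"
      using move[OF assms(1), of "\<delta>0/4"] \<delta>0 by auto
    show "\<exists>\<delta>>0. \<forall>\<sigma> xs. (\<forall>k. \<sigma> k \<in> L) \<and> delta_chain M \<omega> \<delta> xs \<sigma> \<longrightarrow>
        (\<exists>y\<in>M. \<forall>k. dist (xs k) (comp_seq \<omega> \<sigma> k y) < \<epsilon>)"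
    proof (rule exI[of _ "b/2"], intro conjI allI impI)
      show "b/2 > 0" using b by simp
      fix \<sigma> xs assume asm: "(\<forall>k. \<sigma> k \<in> L) \<and> delta_chain M \<omega> (b/2) xs \<sigma>"
      have \<sigma>L: "\<And>k. \<sigma> k \<in> L" and xsM: "\<And>k. xs k \<in> M"
        and ch: "\<And>k. dist (xs (Suc k)) (\<omega> (\<sigma> k) (xs k)) \<le> b/2"
        using asm unfolding delta_chain_def by auto
      have "\<forall>k. \<exists>g. continuous_on M g \<and> g ` M \<subseteq> M \<and> g (\<omega> (\<sigma> k) (xs k)) = xs (Suc k) \<and> (\<forall>x\<in>M. dist (g x) x < \<delta>0/4)"
      proof
        fix k
        have "dist (\<omega> (\<sigma> k) (xs k)) (xs (Suc k)) < b" using ch[of k] b by (simp add: dist_commute)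
        then show "\<exists>g. continuous_on M g \<and> g ` M \<subseteq> M \<and> g (\<omega> (\<sigma> k) (xs k)) = xs (Suc k) \<and> (\<forall>x\<in>M. dist (g x) x < \<delta>0/4)"
          using mv into \<sigma>L xsM by blast
      qed
      then obtain G where G: "\<And>k. continuous_on M (G k)" "\<And>k. G k ` M \<subseteq> M"
        "\<And>k. G k (\<omega> (\<sigma> k) (xs k)) = xs (Suc k)" "\<And>k x. x \<in> M \<Longrightarrow> dist (G k x) x < \<delta>0/4"
        by metis
      have fin: "\<exists>y\<in>M. \<forall>k\<le>N. dist (xs k) (comp_seq \<omega> \<sigma> k y) < \<epsilon>/2" for N
      proof -
        define F where "F j = (if j < N then G j \<circ> \<omega> (\<sigma> j) else \<omega> (net (j - N)))" for j
        define P where "P j = (\<lambda>i::nat. real j)" for j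
        define \<omega>' where "\<omega>' p = F (nat \<lfloor>p 0\<rfloor>)" for p :: "nat \<Rightarrow> real"
        define L' where "L' = P ` {..<N+m}"
        define \<sigma>' where "\<sigma>' k = P (if k < N then k else N + idx (\<sigma> k))" for k
        have \<omega>'P: "\<omega>' (P j) = F j" for j by (simp add: \<omega>'_def P_def)
        have FM: "F j ` M \<subseteq> M" if "j < N + m" for j
          using that G(2) into \<sigma>L netL by (auto simp: F_def image_subset_iff)
        have Fc: "continuous_on M (F j)" if "j < N + m" for j
        proof (cases "j < N")
          case True
          then show ?thesis using continuous_on_compose[OF \<omega>cont[OF \<sigma>L] continuous_on_subset[OF G(1) \<omega>M[OF \<sigma>L]]]
            by (simp add: F_def)
        next
          case False
          then show ?thesis using that \<omega>cont netL by (simp add: F_def)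
        qed
        have \<omega>'M: "\<omega>' l' ` M \<subseteq> M" if "l' \<in> L'" for l'
          using that FM by (force simp: L'_def \<omega>'P)
        have \<sigma>'L': "\<sigma>' k \<in> L'" for k
          using idx(1)[OF \<sigma>L[of k]] by (auto simp: \<sigma>'_def L'_def)
        have IFS': "IFS L' M \<omega>'"
          unfolding IFS_def
        proof (intro conjI ballI)
          show "compact L'" unfolding L'_def by (rule finite_imp_compact) simp
          show "L' \<noteq> {}" using m0 unfolding L'_def by (metis add_gr_0 empty_iff image_is_empty lessThan_iff)
          show "\<omega>' l x \<in> M" if "l \<in> L'" "x \<in> M" for l x using \<omega>'M[OF that(1)] that(2) by blast
          have eq: "L' \<times> M = (\<Union>j\<in>{..<N+m}. {P j} \<times> M)" by (auto simp: L'_def)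
          show "continuous_on (L' \<times> M) (\<lambda>(l, x). \<omega>' l x)"
            unfolding eq
          proof (rule continuous_on_closed_Union)
            fix j assume j: "j \<in> {..<N+m}"
            show "closed ({P j} \<times> M)" using cM by (simp add: closed_Times compact_imp_closed)
            have "continuous_on ({P j} \<times> M) (\<lambda>z. F j (snd z))"
              by (rule continuous_on_compose2[OF Fc]) (use j in \<open>auto intro!: continuous_intros\<close>)
            then show "continuous_on ({P j} \<times> M) (\<lambda>(l, x). \<omega>' l x)"
              by (rule continuous_on_cong[THEN iffD1, rotated 2]) (auto simp: \<omega>'P)
          qed simp
        qed
        have bnd1: "dC0 M (\<omega> l) (\<omega>' (P (N + idx l))) \<le> \<delta>0/4" if "l \<in> L" for l
        proof (rule dC0_le[OF Mne])
          fix x assume "x \<in> M"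
          then show "dist (\<omega> l x) (\<omega>' (P (N + idx l)) x) \<le> \<delta>0/4"
            using close[OF that netL[OF idx(1)[OF that]]] idx[OF that] by (simp add: \<omega>'P F_def dist_commute less_imp_le)
        qed
        have bnd2: "dC0 M (\<omega> (\<sigma> j)) (\<omega>' (P j)) \<le> \<delta>0/4" if "j < N" for j
        proof (rule dC0_le[OF Mne])
          fix x assume "x \<in> M"
          then show "dist (\<omega> (\<sigma> j) x) (\<omega>' (P j) x) \<le> \<delta>0/4"
            using G(4)[of "\<omega> (\<sigma> j) x" j] into[OF \<sigma>L] that by (simp add: \<omega>'P F_def dist_commute less_imp_le)
        qed
        have bnd3: "dC0 M (\<omega> (net (j - N))) (\<omega>' (P j)) \<le> \<delta>0/4" if "\<not> j < N" for j
          by (rule dC0_le[OF Mne]) (use that \<delta>0 in \<open>simp add: \<omega>'P F_def\<close>)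
        have nn: "0 \<le> dC0 M (\<omega> l) (\<omega>' l')" if "l \<in> L" "l' \<in> L'" for l l'
          by (rule dC0_nonneg[OF bM \<omega>M[OF that(1)] \<omega>'M[OF that(2)] Mne])
        have dH: "dH_IFS M L \<omega> L' \<omega>' \<le> \<delta>0"
        proof -
          have A1: "(SUP l\<in>L. INF l'\<in>L'. dC0 M (\<omega> l) (\<omega>' l')) \<le> \<delta>0/4"
          proof (rule cSUP_least[OF Lne])
            fix l assume l: "l \<in> L"
            have a: "P (N + idx l) \<in> L'" using idx(1)[OF l] by (simp add: L'_def)
            have bb: "bdd_below ((\<lambda>l'. dC0 M (\<omega> l) (\<omega>' l')) ` L')"
              by (rule bdd_belowI[where m=0]) (use nn l in blast)
            have "(INF l'\<in>L'. dC0 M (\<omega> l) (\<omega>' l')) \<le> dC0 M (\<omega> l) (\<omega>' (P (N + idx l)))"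
              by (rule cINF_lower[OF bb a])
            then show "(INF l'\<in>L'. dC0 M (\<omega> l) (\<omega>' l')) \<le> \<delta>0/4" using bnd1[OF l] by linarith
          qed
          have A2: "(SUP l'\<in>L'. INF l\<in>L. dC0 M (\<omega> l) (\<omega>' l')) \<le> \<delta>0/4"
          proof (rule cSUP_least)
            show "L' \<noteq> {}" using m0 unfolding L'_def by (metis add_gr_0 empty_iff image_is_empty lessThan_iff)
            fix l' assume l': "l' \<in> L'"
            then obtain j where j: "j < N + m" "l' = P j" by (auto simp: L'_def)
            define l where "l = (if j < N then \<sigma> j else net (j - N))"
            have lL: "l \<in> L" using j \<sigma>L netL by (auto simp: l_def)
            have bb: "bdd_below ((\<lambda>l. dC0 M (\<omega> l) (\<omega>' l')) ` L)"
              by (rule bdd_belowI[where m=0]) (use nn l' in blast)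
            have "(INF l\<in>L. dC0 M (\<omega> l) (\<omega>' l')) \<le> dC0 M (\<omega> l) (\<omega>' l')"
              by (rule cINF_lower[OF bb lL])
            moreover have "dC0 M (\<omega> l) (\<omega>' l') \<le> \<delta>0/4"
              using bnd2[of j] bnd3[of j] j by (auto simp: l_def)
            ultimately show "(INF l\<in>L. dC0 M (\<omega> l) (\<omega>' l')) \<le> \<delta>0/4" by linarith
          qed
          show ?thesis unfolding dH_IFS_def using A1 A2 \<delta>0 by simp
        qed
        have compat: "dC0 M (\<omega> (\<sigma> k)) (\<omega>' (\<sigma>' k)) < \<delta>0" for k
        proof (cases "k < N")
          case True
          then show ?thesis using bnd2[OF True] \<delta>0 by (simp add: \<sigma>'_def)
        next
          case False
          then show ?thesis using bnd1[OF \<sigma>L[of k]] \<delta>0 by (simp add: \<sigma>'_def)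
        qed
        obtain h where h: "h ` M \<subseteq> M" "\<And>k. dC0 M (comp_seq \<omega> \<sigma> k \<circ> h) (comp_seq \<omega>' \<sigma>' k) < \<epsilon>/2"
          using TS[OF IFS' dH] \<sigma>L \<sigma>'L' compat by blast
        have orb: "comp_seq \<omega>' \<sigma>' k (xs 0) = xs k" if "k \<le> N" for k
          using that
        proof (induction k)
          case 0 then show ?case by simp
        next
          case (Suc k)
          then have "k < N" by simp
          then have "\<omega>' (\<sigma>' k) = G k \<circ> \<omega> (\<sigma> k)" by (simp add: \<sigma>'_def \<omega>'P F_def)
          then show ?case using Suc G(3) by simp
        qed
        have inM1: "(comp_seq \<omega> \<sigma> k \<circ> h) ` M \<subseteq> M" for k
          using comp_seq_in[of M \<omega> \<sigma>] into \<sigma>L h(1) by auto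
        have inM2: "comp_seq \<omega>' \<sigma>' k ` M \<subseteq> M" for k
          using comp_seq_in[of M \<omega>' \<sigma>'] \<omega>'M \<sigma>'L' by blast
        show ?thesis
        proof (rule bexI[of _ "h (xs 0)"])
          show "h (xs 0) \<in> M" using h(1) xsM by blast
          show "\<forall>k\<le>N. dist (xs k) (comp_seq \<omega> \<sigma> k (h (xs 0))) < \<epsilon>/2"
          proof (intro allI impI)
            fix k assume "k \<le> N"
            have "dist ((comp_seq \<omega> \<sigma> k \<circ> h) (xs 0)) (comp_seq \<omega>' \<sigma>' k (xs 0)) \<le> dC0 M (comp_seq \<omega> \<sigma> k \<circ> h) (comp_seq \<omega>' \<sigma>' k)"
              by (rule dC0_ge[OF bM inM1 inM2 xsM])
            then show "dist (xs k) (comp_seq \<omega> \<sigma> k (h (xs 0))) < \<epsilon>/2"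
              using h(2)[of k] orb[OF \<open>k \<le> N\<close>] by (simp add: dist_commute)
          qed
        qed
      qed
      then obtain Y where Y: "\<And>N. Y N \<in> M" "\<And>N k. k \<le> N \<Longrightarrow> dist (xs k) (comp_seq \<omega> \<sigma> k (Y N)) < \<epsilon>/2"
        by metis
      obtain y r where y: "y \<in> M" "strict_mono r" "(Y \<circ> r) \<longlonglongrightarrow> y"
        using seq_compactE[OF compact_imp_seq_compact[OF cM]] Y(1) by metis
      show "\<exists>y\<in>M. \<forall>k. dist (xs k) (comp_seq \<omega> \<sigma> k y) < \<epsilon>"
      proof (intro bexI[OF _ y(1)] allI)
        fix k
        have cc: "continuous_on M (comp_seq \<omega> \<sigma> k)"
          by (rule comp_seq_cont) (use into \<sigma>L \<omega>cont in auto)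
        have "(\<lambda>n. comp_seq \<omega> \<sigma> k ((Y \<circ> r) n)) \<longlonglongrightarrow> comp_seq \<omega> \<sigma> k y"
          by (rule continuous_on_tendsto_compose[OF cc y(3) y(1)]) (use Y(1) in simp)
        then have "(\<lambda>n. dist (xs k) (comp_seq \<omega> \<sigma> k ((Y \<circ> r) n))) \<longlonglongrightarrow> dist (xs k) (comp_seq \<omega> \<sigma> k y)"
          by (intro tendsto_intros)
        moreover have "\<exists>N0. \<forall>n\<ge>N0. dist (xs k) (comp_seq \<omega> \<sigma> k ((Y \<circ> r) n)) \<le> \<epsilon>/2"
        proof (intro exI allI impI)
          fix n assume "k \<le> n"
          then have "k \<le> r n" using seq_suble[OF y(2), of n] by linarith
          then show "dist (xs k) (comp_seq \<omega> \<sigma> k ((Y \<circ> r) n)) \<le> \<epsilon>/2"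
            using Y(2)[of k "r n"] by simp
        qed
        ultimately have "dist (xs k) (comp_seq \<omega> \<sigma> k y) \<le> \<epsilon>/2" by (rule LIMSEQ_le_const2)
        then show "dist (xs k) (comp_seq \<omega> \<sigma> k y) < \<epsilon>" using \<epsilon> by linarith
      qed
    qed
  qed
qed

end
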